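(* Let $(X,d)$ be a ubiquitously amenable and uniformly locally finite extended metric space. Then for all $r,\varepsilon>0$ there exists $S>0$ such that for every finite nonempty $M\subseteq X$ there is a finite set $F$ with $M\subseteq F\subseteq\bar B(M,S)$ and $|\partial^+_rF|\le\varepsilon|F|$.
   Context: An extended metric may take the value $\infty$. $\bar B(A,R)=\{x:d(x,A)\le R\}$. $(X,d)$ is uniformly locally finite if $\sup_{x\in X}|\bar B(x,R)|<\infty$ for every $R>0$. Outer boundary: $\partial^+_RA=\{x\in X\setminus A:d(x,A)\le R\}$; $R$-boundary: $\partial_RA=\{x\in X:d(x,A)\le R\text{ and }d(x,X\setminus A)\le R\}$. A finite nonempty $F$ is $(R,\varepsilon)$-Følner if $|\partial_RF|\le\varepsilon|F|$. $(X,d)$ is ubiquitously amenable if for all $R,\varepsilon>0$ there is $S>0$ such that every ball $\bar B(x,S)$, $x\in X$, contains an $(R,\varepsilon)$-Følner set. *)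

theory Defs
  imports "HOL-Analysis.Analysis" "HOL-Library.Extended_Nonnegative_Real"
begin

definition ext_metric :: "('a \<Rightarrow> 'a \<Rightarrow> ennreal) \<Rightarrow> bool" where
  "ext_metric d \<longleftrightarrow>
     (\<forall>x y. d x y = 0 \<longleftrightarrow> x = y) \<and>
     (\<forall>x y. d x y = d y x) \<and>
     (\<forall>x y z. d x z \<le> d x y + d y z)"

text \<open>d(x,A) = inf of d(x,a) over a in A (= \<infinity> for A empty).\<close>
definition setdist :: "('a \<Rightarrow> 'a \<Rightarrow> ennreal) \<Rightarrow> 'a \<Rightarrow> 'a set \<Rightarrow> ennreal" where
  "setdist d x A = (INF a\<in>A. d x a)"

definition cnbhd :: "('a \<Rightarrow> 'a \<Rightarrow> ennreal) \<Rightarrow> 'a set \<Rightarrow> real \<Rightarrow> 'a set" where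
  "cnbhd d A R = {x. setdist d x A \<le> ennreal R}"

definition unif_loc_finite :: "('a \<Rightarrow> 'a \<Rightarrow> ennreal) \<Rightarrow> bool" where
  "unif_loc_finite d \<longleftrightarrow>
     (\<forall>R>0. \<exists>N::nat. \<forall>x. finite (cnbhd d {x} R) \<and> card (cnbhd d {x} R) \<le> N)"

definition outer_boundary :: "('a \<Rightarrow> 'a \<Rightarrow> ennreal) \<Rightarrow> real \<Rightarrow> 'a set \<Rightarrow> 'a set" where
  "outer_boundary d R A = {x. x \<notin> A \<and> setdist d x A \<le> ennreal R}"

definition boundary :: "('a \<Rightarrow> 'a \<Rightarrow> ennreal) \<Rightarrow> real \<Rightarrow> 'a set \<Rightarrow> 'a set" where
  "boundary d R A = {x. setdist d x A \<le> ennreal R \<and> setdist d x (- A) \<le> ennreal R}"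

definition folner :: "('a \<Rightarrow> 'a \<Rightarrow> ennreal) \<Rightarrow> real \<Rightarrow> real \<Rightarrow> 'a set \<Rightarrow> bool" where
  "folner d R \<epsilon> F \<longleftrightarrow> finite F \<and> F \<noteq> {} \<and> finite (boundary d R F) \<and>
     real (card (boundary d R F)) \<le> \<epsilon> * real (card F)"

definition ubiq_amenable :: "('a \<Rightarrow> 'a \<Rightarrow> ennreal) \<Rightarrow> bool" where
  "ubiq_amenable d \<longleftrightarrow>
     (\<forall>R>0. \<forall>\<epsilon>>0. \<exists>S>0. \<forall>x. \<exists>F. F \<subseteq> cnbhd d {x} S \<and> folner d R \<epsilon> F)"

end

theory Submission imports Defs begin

lemma setdist_single[simp]: "setdist d x {m} = d x m"
  by (simp add: setdist_def)

lemma setdist_le_iff: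
  assumes "finite A" "A \<noteq> {}"
  shows "setdist d x A \<le> e \<longleftrightarrow> (\<exists>a\<in>A. d x a \<le> e)"
proof
  assume h: "setdist d x A \<le> e"
  have "Min (d x ` A) \<in> d x ` A" using assms by (intro Min_in) auto
  moreover have "Min (d x ` A) = setdist d x A"
    unfolding setdist_def using assms by (intro Min_Inf) auto
  ultimately show "\<exists>a\<in>A. d x a \<le> e" using h by auto
next
  assume "\<exists>a\<in>A. d x a \<le> e"
  then show "setdist d x A \<le> e" unfolding setdist_def by (meson INF_lower2)
qed

lemma setdist_le_mem: "a \<in> A \<Longrightarrow> setdist d x A \<le> d x a"
  unfolding setdist_def by (rule INF_lower)

lemma cnbhd_empty[simp]: "cnbhd d {} R = {}"
  by (simp add: cnbhd_def setdist_def top_unique)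

lemma cnbhd_sub_UN:
  assumes "finite M"
  shows "cnbhd d M R \<subseteq> (\<Union>m\<in>M. cnbhd d {m} R)"
proof (cases "M = {}")
  case False
  then show ?thesis using assms by (auto simp: cnbhd_def setdist_le_iff)
qed simp

lemma cnbhd_mono: "R \<le> R' \<Longrightarrow> cnbhd d M R \<subseteq> cnbhd d M R'"
  unfolding cnbhd_def by (auto intro: order_trans ennreal_leI)

lemma ulf_bound:
  assumes "unif_loc_finite d" "R > 0"
  obtains N :: nat where "\<And>x. finite (cnbhd d {x} R)" "\<And>x. card (cnbhd d {x} R) \<le> N"
  using assms unfolding unif_loc_finite_def by blast

lemma cnbhd_card:
  assumes "finite M" "\<And>x. finite (cnbhd d {x} R)" "\<And>x. card (cnbhd d {x} R) \<le> N"
  shows "finite (cnbhd d M R)" "card (cnbhd d M R) \<le> N * card M"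
proof -
  have f: "finite (\<Union>m\<in>M. cnbhd d {m} R)" using assms by auto
  then show "finite (cnbhd d M R)" using cnbhd_sub_UN[OF assms(1)] finite_subset by blast
  have "card (cnbhd d M R) \<le> card (\<Union>m\<in>M. cnbhd d {m} R)"
    using cnbhd_sub_UN[OF assms(1)] f by (intro card_mono) auto
  also have "\<dots> \<le> (\<Sum>m\<in>M. card (cnbhd d {m} R))" using assms(1) by (rule card_UN_le)
  also have "\<dots> \<le> (\<Sum>m\<in>M. N)" using assms(3) by (intro sum_mono) auto
  finally show "card (cnbhd d M R) \<le> N * card M" by (simp add: mult.commute)
qed

lemma max_sep:
  assumes "finite P" "\<And>a b. R a b = R b a" "\<And>a. R a a"
  shows "\<exists>Y\<subseteq>P. (\<forall>y\<in>Y. \<forall>y'\<in>Y. y \<noteq> y' \<longrightarrow> \<not> R y y') \<and> (\<forall>x\<in>P. \<exists>y\<in>Y. R x y)"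
  using assms(1)
proof (induction P rule: finite_induct)
  case empty
  then show ?case by auto
next
  case (insert x P)
  then obtain Y where Y: "Y \<subseteq> P" "\<forall>y\<in>Y. \<forall>y'\<in>Y. y \<noteq> y' \<longrightarrow> \<not> R y y'" "\<forall>x\<in>P. \<exists>y\<in>Y. R x y"
    by blast
  show ?case
  proof (cases "\<exists>y\<in>Y. R x y")
    case True
    then show ?thesis using Y by (intro exI[of _ Y]) auto
  next
    case False
    then show ?thesis using Y assms(2,3) by (intro exI[of _ "insert x Y"]) auto
  qed
qed

lemma em_tri: "ext_metric d \<Longrightarrow> d x z \<le> d x y + d y z"
  unfolding ext_metric_def by blast
lemma em_sym: "ext_metric d \<Longrightarrow> d x y = d y x"
  unfolding ext_metric_def by blast
lemma em_refl[simp]: "ext_metric d \<Longrightarrow> d x x = 0"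
  unfolding ext_metric_def by blast

lemma em_tri_real:
  assumes "ext_metric d" "d x y \<le> ennreal a" "d y z \<le> ennreal b" "a \<ge> 0" "b \<ge> 0"
  shows "d x z \<le> ennreal (a + b)"
proof -
  have "d x z \<le> d x y + d y z" using assms(1) by (rule em_tri)
  also have "\<dots> \<le> ennreal a + ennreal b" using assms(2,3) by (rule add_mono)
  finally show ?thesis using assms(4,5) by (simp add: ennreal_plus)
qed

lemma M_sub_cnbhd: assumes "ext_metric d" "t \<ge> 0" shows "M \<subseteq> cnbhd d M t"
proof
  fix m assume "m \<in> M"
  then have "setdist d m M \<le> 0" using setdist_le_mem[of m M d m] assms(1) by simp
  then show "m \<in> cnbhd d M t" unfolding cnbhd_def by simp
qed

lemma ob_step:
  assumes "ext_metric d" "finite M" "M \<noteq> {}" "finite (cnbhd d M t)" "t \<ge> 0" "r \<ge> 0"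
  shows "outer_boundary d r (cnbhd d M t) \<subseteq> cnbhd d M (t + r) - cnbhd d M t"
proof
  fix x assume x: "x \<in> outer_boundary d r (cnbhd d M t)"
  have ne: "cnbhd d M t \<noteq> {}" using M_sub_cnbhd[OF assms(1,5), of M] assms(3) by auto
  from x obtain a where a: "a \<in> cnbhd d M t" "d x a \<le> ennreal r" "x \<notin> cnbhd d M t"
    unfolding outer_boundary_def using setdist_le_iff[OF assms(4) ne] by auto
  then obtain m where m: "m \<in> M" "d a m \<le> ennreal t"
    unfolding cnbhd_def using setdist_le_iff[OF assms(2,3)] by auto
  have "d x m \<le> ennreal (r + t)" using em_tri_real[OF assms(1) a(2) m(2) assms(6,5)] .
  then have "setdist d x M \<le> ennreal (t + r)" using setdist_le_mem[OF m(1), of d x] by (simp add: add.commute)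
  then show "x \<in> cnbhd d M (t + r) - cnbhd d M t" using a(3) by (simp add: cnbhd_def)
qed

lemma ob_union:
  assumes "ext_metric d" "finite M" "M \<noteq> {}" "finite Y" "\<And>y. y \<in> Y \<Longrightarrow> finite (G y)"
  shows "outer_boundary d r (M \<union> (\<Union>y\<in>Y. G y)) \<subseteq> cnbhd d M r \<union> (\<Union>y\<in>Y. boundary d r (G y))"
proof
  fix x assume x: "x \<in> outer_boundary d r (M \<union> (\<Union>y\<in>Y. G y))"
  have fin: "finite (M \<union> (\<Union>y\<in>Y. G y))" using assms by auto
  from x obtain z where z: "z \<in> M \<union> (\<Union>y\<in>Y. G y)" "d x z \<le> ennreal r" "x \<notin> M \<union> (\<Union>y\<in>Y. G y)"
    unfolding outer_boundary_def using setdist_le_iff[OF fin] assms(3) by auto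
  show "x \<in> cnbhd d M r \<union> (\<Union>y\<in>Y. boundary d r (G y))"
  proof (cases "z \<in> M")
    case True
    then show ?thesis using z(2) setdist_le_mem[OF True, of d x] unfolding cnbhd_def by (auto intro: order_trans)
  next
    case False
    then obtain y where y: "y \<in> Y" "z \<in> G y" using z(1) by auto
    have "setdist d x (G y) \<le> ennreal r" using setdist_le_mem[OF y(2), of d x] z(2) by (auto intro: order_trans)
    moreover have "x \<in> - G y" using z(3) y by auto
    then have "setdist d x (- G y) \<le> ennreal r" using setdist_le_mem[of x "- G y" d x] assms(1) by auto
    ultimately show ?thesis using y unfolding boundary_def by auto
  qed
qed

theorem proposition3p5:
  fixes d :: "'a \<Rightarrow> 'a \<Rightarrow> ennreal"
  assumes "ext_metric d" and "ubiq_amenable d" and "unif_loc_finite d"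
  shows "\<forall>r>0. \<forall>\<epsilon>>0. \<exists>S>0. \<forall>M. finite M \<and> M \<noteq> {} \<longrightarrow>
           (\<exists>F. finite F \<and> M \<subseteq> F \<and> F \<subseteq> cnbhd d M S \<and>
                finite (outer_boundary d r F) \<and>
                real (card (outer_boundary d r F)) \<le> \<epsilon> * real (card F))"
proof (intro allI impI)
  fix r \<epsilon> :: real assume r: "r > 0" and e: "\<epsilon> > 0"
  have em: "ext_metric d" by (rule assms(1))
  from assms(2) r e obtain S0 where S0: "S0 > 0"
    and hS0: "\<forall>x. \<exists>F. F \<subseteq> cnbhd d {x} S0 \<and> folner d r (\<epsilon>/2) F"
    unfolding ubiq_amenable_def by (meson half_gt_zero)
  from hS0 obtain G where G: "\<And>x. G x \<subseteq> cnbhd d {x} S0" "\<And>x. folner d r (\<epsilon>/2) (G x)"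
    by metis
  obtain Kr :: nat where Kr: "\<And>x. finite (cnbhd d {x} r)" "\<And>x. card (cnbhd d {x} r) \<le> Kr"
    using ulf_bound[OF assms(3) r] by blast
  have S02: "2 * S0 > 0" using S0 by simp
  obtain K2 :: nat where K2: "\<And>x. finite (cnbhd d {x} (2*S0))" "\<And>x. card (cnbhd d {x} (2*S0)) \<le> K2"
    using ulf_bound[OF assms(3) S02] by blast
  obtain n :: nat where n: "real K2 * (2 * real Kr / \<epsilon>) < (1 + \<epsilon>) ^ n"
    using real_arch_pow[of "1 + \<epsilon>"] e by auto
  define S where "S = real n * r + S0"
  have Spos: "S > 0" using S0 r by (auto simp: S_def intro!: add_nonneg_pos)
  show "\<exists>S>0. \<forall>M. finite M \<and> M \<noteq> {} \<longrightarrow>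
           (\<exists>F. finite F \<and> M \<subseteq> F \<and> F \<subseteq> cnbhd d M S \<and>
                finite (outer_boundary d r F) \<and>
                real (card (outer_boundary d r F)) \<le> \<epsilon> * real (card F))"
  proof (intro exI[of _ S] conjI allI impI Spos)
    fix M :: "'a set" assume "finite M \<and> M \<noteq> {}"
    then have Mf: "finite M" and Mne: "M \<noteq> {}" by auto
    define A where "A j = cnbhd d M (real j * r)" for j
    have Afin: "finite (A j)" for j
    proof -
      have "A j \<subseteq> cnbhd d M (real (Suc j) * r)" unfolding A_def
        by (rule cnbhd_mono) (use r in \<open>simp add: mult_right_mono\<close>)
      moreover have "\<And>x. finite (cnbhd d {x} (real (Suc j) * r))" "\<And>x. card (cnbhd d {x} (real (Suc j) * r)) \<le> (SOME N. \<forall>x. card (cnbhd d {x} (real (Suc j) * r)) \<le> N)"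
      proof -
        have p: "real (Suc j) * r > 0" using r by simp
        obtain N :: nat where N: "\<And>x. finite (cnbhd d {x} (real (Suc j) * r))" "\<And>x. card (cnbhd d {x} (real (Suc j) * r)) \<le> N"
          using ulf_bound[OF assms(3) p] by blast
        show "\<And>x. finite (cnbhd d {x} (real (Suc j) * r))" by (rule N(1))
        show "\<And>x. card (cnbhd d {x} (real (Suc j) * r)) \<le> (SOME N. \<forall>x. card (cnbhd d {x} (real (Suc j) * r)) \<le> N)"
          using someI[of "\<lambda>N. \<forall>x. card (cnbhd d {x} (real (Suc j) * r)) \<le> N" N] N(2) by blast
      qed
      ultimately show ?thesis using cnbhd_card(1)[OF Mf] finite_subset by blast
    qed
    have MA: "M \<subseteq> A j" for j unfolding A_def using M_sub_cnbhd[OF em] r by simp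
    have AS: "A j \<subseteq> cnbhd d M S" if "j \<le> n" for j
    proof -
      have "real j * r \<le> real n * r" using r that by (intro mult_right_mono) auto
      then have "real j * r \<le> S" using S0 by (simp add: S_def)
      then show ?thesis unfolding A_def by (rule cnbhd_mono)
    qed
    have Astep: "outer_boundary d r (A j) \<subseteq> A (Suc j) - A j" for j
    proof -
      have "outer_boundary d r (A j) \<subseteq> cnbhd d M (real j * r + r) - A j"
        unfolding A_def by (rule ob_step[OF em Mf Mne]) (use Afin r in \<open>auto simp: A_def\<close>)
      also have "real j * r + r = real (Suc j) * r" by (simp add: algebra_simps)
      finally show ?thesis by (simp add: A_def)
    qed
    have obfin: "finite (outer_boundary d r (A j))" for j
      using Astep[of j] Afin[of "Suc j"] finite_subset by blast
    show "\<exists>F. finite F \<and> M \<subseteq> F \<and> F \<subseteq> cnbhd d M S \<and>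
                finite (outer_boundary d r F) \<and>
                real (card (outer_boundary d r F)) \<le> \<epsilon> * real (card F)"
    proof (cases "\<exists>j\<le>n. real (card (outer_boundary d r (A j))) \<le> \<epsilon> * real (card (A j))")
      case True
      then obtain j where j: "j \<le> n" "real (card (outer_boundary d r (A j))) \<le> \<epsilon> * real (card (A j))" by blast
      show ?thesis
        by (rule exI[of _ "A j"]) (intro conjI Afin MA AS[OF j(1)] obfin j(2))
    next
      case False
      have grow: "real (card (A j)) \<ge> (1 + \<epsilon>) ^ j * real (card M)" if "j \<le> n" for j
        using that
      proof (induction j)
        case 0
        have "card M \<le> card (A 0)" using MA Afin by (intro card_mono) auto
        then show ?case by simp
      next
        case (Suc j)
        have Am: "A j \<subseteq> A (Suc j)" unfolding A_def by (rule cnbhd_mono) (use r in auto)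
        have "A j \<union> outer_boundary d r (A j) \<subseteq> A (Suc j)" using Astep[of j] Am by auto
        then have c1: "card (A j \<union> outer_boundary d r (A j)) \<le> card (A (Suc j))"
          using Afin by (intro card_mono) auto
        have c2: "card (A j \<union> outer_boundary d r (A j)) = card (A j) + card (outer_boundary d r (A j))"
          using Afin obfin by (intro card_Un_disjoint) (auto simp: outer_boundary_def)
        have c3: "real (card (A j)) + real (card (outer_boundary d r (A j))) \<le> real (card (A (Suc j)))"
          using c1 c2 by (metis of_nat_add of_nat_le_iff)
        have "real (card (outer_boundary d r (A j))) > \<epsilon> * real (card (A j))"
          using False Suc.prems by (meson Suc_leD not_le)
        moreover have "real (card (A j)) \<ge> (1 + \<epsilon>) ^ j * real (card M)" using Suc by auto
        ultimately have "real (card (A (Suc j))) \<ge> (1 + \<epsilon>) * real (card (A j))"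
          using c3 by (simp add: distrib_right)
        moreover have "(1 + \<epsilon>) * real (card (A j)) \<ge> (1 + \<epsilon>) * ((1 + \<epsilon>) ^ j * real (card M))"
          using Suc e by (intro mult_left_mono) auto
        ultimately show ?case by simp
      qed
      let ?R = "\<lambda>a b. d a b \<le> ennreal (2 * S0)"
      obtain Y where Y: "Y \<subseteq> A n" "\<forall>y\<in>Y. \<forall>y'\<in>Y. y \<noteq> y' \<longrightarrow> \<not> ?R y y'" "\<forall>x\<in>A n. \<exists>y\<in>Y. ?R x y"
      proof -
        have ex: "\<exists>Y\<subseteq>A n. (\<forall>y\<in>Y. \<forall>y'\<in>Y. y \<noteq> y' \<longrightarrow> \<not> ?R y y') \<and> (\<forall>x\<in>A n. \<exists>y\<in>Y. ?R x y)"
        proof (rule max_sep[OF Afin])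
          fix a b show "?R a b = ?R b a" using em_sym[OF em, of a b] by simp
        next
          fix a show "?R a a" using em by simp
        qed
        from ex obtain Y0 where "Y0 \<subseteq> A n" "\<forall>y\<in>Y0. \<forall>y'\<in>Y0. y \<noteq> y' \<longrightarrow> \<not> ?R y y'" "\<forall>x\<in>A n. \<exists>y\<in>Y0. ?R x y"
          by (elim exE conjE)
        then show ?thesis by (rule that)
      qed
      have Yf: "finite Y" using Y(1) Afin finite_subset by blast
      have Gf: "finite (G y)" "G y \<noteq> {}" for y using G(2)[of y] unfolding folner_def by auto
      have disj: "G y \<inter> G y' = {}" if "y \<in> Y" "y' \<in> Y" "y \<noteq> y'" for y y'
      proof (rule ccontr)
        assume "G y \<inter> G y' \<noteq> {}"
        then obtain z where z: "z \<in> G y" "z \<in> G y'" by auto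
        have "z \<in> cnbhd d {y} S0" using z(1) G(1)[of y] by blast
        then have h1: "d z y \<le> ennreal S0" by (simp add: cnbhd_def)
        have "z \<in> cnbhd d {y'} S0" using z(2) G(1)[of y'] by blast
        then have h2: "d z y' \<le> ennreal S0" by (simp add: cnbhd_def)
        have h1': "d y z \<le> ennreal S0" using h1 em_sym[OF em, of z y] by metis
        have "d y y' \<le> ennreal (S0 + S0)"
          by (rule em_tri_real[OF em h1' h2]) (use S0 in auto)
        moreover have "\<not> d y y' \<le> ennreal (2 * S0)" using Y(2) that by meson
        moreover have "S0 + S0 = 2 * S0" by simp
        ultimately show False by metis
      qed
      define U where "U = (\<Union>y\<in>Y. G y)"
      define F where "F = M \<union> U"
      have Uf: "finite U" using Yf Gf by (auto simp: U_def)
      have cardU: "card U = (\<Sum>y\<in>Y. card (G y))"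
        unfolding U_def using Yf Gf disj by (intro card_UN_disjoint) auto
      have YU: "card Y \<le> card U"
      proof -
        have "card Y = (\<Sum>y\<in>Y. 1)" by simp
        also have "\<dots> \<le> (\<Sum>y\<in>Y. card (G y))" using Gf by (intro sum_mono) (simp add: Suc_leI card_gt_0_iff)
        finally show ?thesis using cardU by simp
      qed
      have AnY: "card (A n) \<le> K2 * card Y"
      proof -
        have "A n \<subseteq> (\<Union>y\<in>Y. cnbhd d {y} (2*S0))" using Y(3) by (auto simp: cnbhd_def)
        then have "card (A n) \<le> card (\<Union>y\<in>Y. cnbhd d {y} (2*S0))"
          using Yf K2 by (intro card_mono) auto
        also have "\<dots> \<le> (\<Sum>y\<in>Y. card (cnbhd d {y} (2*S0)))" using Yf by (rule card_UN_le)
        also have "\<dots> \<le> (\<Sum>y\<in>Y. K2)" using K2 by (intro sum_mono) auto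
        finally show ?thesis by (simp add: mult.commute)
      qed
      have K2pos: "K2 > 0"
      proof -
        obtain m where "m \<in> M" using Mne by auto
        have "m \<in> cnbhd d {m} (2*S0)" using em S0 by (simp add: cnbhd_def)
        then have "card (cnbhd d {m} (2*S0)) > 0" using K2(1) card_gt_0_iff by blast
        then show ?thesis using K2(2)[of m] by simp
      qed
      have key: "real Kr * real (card M) \<le> \<epsilon>/2 * real (card U)"
      proof -
        have "real K2 * (2 * real Kr / \<epsilon>) * real (card M) \<le> (1 + \<epsilon>) ^ n * real (card M)"
          using n by (intro mult_right_mono) auto
        also have "\<dots> \<le> real (card (A n))" using grow by simp
        also have "\<dots> \<le> real K2 * real (card Y)" using AnY by (metis of_nat_le_iff of_nat_mult)
        finally have "real K2 * ((2 * real Kr / \<epsilon>) * real (card M)) \<le> real K2 * real (card Y)" by (simp add: mult.assoc)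
        then have "(2 * real Kr / \<epsilon>) * real (card M) \<le> real (card Y)"
          by (rule mult_left_le_imp_le) (use K2pos in simp)
        also have "\<dots> \<le> real (card U)" using YU by simp
        finally have "(2 * real Kr / \<epsilon>) * real (card M) \<le> real (card U)" .
        then show ?thesis using e by (simp add: field_simps)
      qed
      have obsub: "outer_boundary d r F \<subseteq> cnbhd d M r \<union> (\<Union>y\<in>Y. boundary d r (G y))"
        unfolding F_def U_def by (rule ob_union[OF em Mf Mne Yf Gf(1)])
      have bf: "finite (boundary d r (G y))" and bc: "real (card (boundary d r (G y))) \<le> \<epsilon>/2 * real (card (G y))" for y
        using G(2)[of y] unfolding folner_def by auto
      have cMf: "finite (cnbhd d M r)" and cMc: "card (cnbhd d M r) \<le> Kr * card M"
        using cnbhd_card[OF Mf Kr] by auto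
      have obf: "finite (outer_boundary d r F)"
        using obsub cMf bf Yf finite_subset by blast
      have "card (outer_boundary d r F) \<le> card (cnbhd d M r \<union> (\<Union>y\<in>Y. boundary d r (G y)))"
        using obsub cMf bf Yf by (intro card_mono) auto
      also have "\<dots> \<le> card (cnbhd d M r) + card (\<Union>y\<in>Y. boundary d r (G y))" by (rule card_Un_le)
      also have "\<dots> \<le> card (cnbhd d M r) + (\<Sum>y\<in>Y. card (boundary d r (G y)))"
        using card_UN_le[OF Yf] by simp
      finally have "real (card (outer_boundary d r F)) \<le> real (card (cnbhd d M r)) + (\<Sum>y\<in>Y. real (card (boundary d r (G y))))"
        by (metis of_nat_add of_nat_le_iff of_nat_sum)
      also have "\<dots> \<le> real Kr * real (card M) + (\<Sum>y\<in>Y. \<epsilon>/2 * real (card (G y)))"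
        using cMc bc by (intro add_mono sum_mono) (auto simp flip: of_nat_mult)
      also have "(\<Sum>y\<in>Y. \<epsilon>/2 * real (card (G y))) = \<epsilon>/2 * real (card U)"
        by (simp add: cardU sum_distrib_left)
      also have "real Kr * real (card M) + \<epsilon>/2 * real (card U) \<le> \<epsilon> * real (card U)" using key by simp
      also have "\<dots> \<le> \<epsilon> * real (card F)"
        using e Uf Mf by (intro mult_left_mono) (auto simp: F_def intro: card_mono)
      finally have fin: "real (card (outer_boundary d r F)) \<le> \<epsilon> * real (card F)" .
      have FS: "F \<subseteq> cnbhd d M S"
      proof
        fix z assume "z \<in> F"
        then consider "z \<in> M" | y where "y \<in> Y" "z \<in> G y" unfolding F_def U_def by auto
        then show "z \<in> cnbhd d M S"
        proof cases
          case 1 then show ?thesis using MA AS by blast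
        next
          case 2
          then have zy: "d z y \<le> ennreal S0" using G(1) by (auto simp: cnbhd_def)
          have "y \<in> A n" using 2 Y(1) by auto
          then obtain m where m: "m \<in> M" "d y m \<le> ennreal (real n * r)"
            unfolding A_def cnbhd_def using setdist_le_iff[OF Mf Mne] by auto
          have "d z m \<le> ennreal (S0 + real n * r)" using em_tri_real[OF em zy m(2)] S0 r by simp
          then have "setdist d z M \<le> ennreal S" using setdist_le_mem[OF m(1), of d z]
            by (simp add: S_def add.commute)
          then show ?thesis by (simp add: cnbhd_def)
        qed
      qed
      show ?thesis using Uf Mf obf fin FS by (intro exI[of _ F]) (auto simp: F_def)
    qed
  qed
qed

end
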